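(* Consider an open chain of $M$ sites, each site $m$ carrying one spinless fermion mode (operators $c_m, c_m^\dagger$ with $\{c_m,c_{m'}^\dagger\}=\delta_{m,m'}$) and one spin-$1/2$. Let $\gamma_m, J_m$ be real numbers with $\gamma_m\neq 0$, and for $1\le m\le M$ define $$\hat h_m^{(L)} = -\gamma_{m-1}c_{m-1}^\dagger c_m + J_{m-1}c_{m-1}^\dagger c_m\sigma_m^-,\qquad \hat h_m^{(R)} = -\gamma_m c_{m+1}^\dagger c_m + J_m c_{m+1}^\dagger c_m \sigma_{m+1}^+,$$ with $\hat h_1^{(L)}=\hat h_M^{(R)}=0$. Fix $Q$ with $1\le Q\le M-2$. Let $|\xi\rangle$ be a state with exactly $Q$ fermions, of the form $|\xi\rangle = c_{f_Q}^\dagger\cdots c_{f_1}^\dagger|\Omega\rangle\otimes|s_1\rangle\otimes\cdots\otimes|s_M\rangle$ with $f_1<\dots<f_Q$, and suppose there is $q\in\{1,\dots,Q\}$ with $f_q\le M-2$ such that sites $f_q+1$ and $f_q+2$ are unoccupied. Then there exist spin states $|s'_{f_q+1}\rangle, |s'_{f_q+2}\rangle$ such that the state $|\xi'\rangle$, obtained from $|\xi\rangle$ by replacing $c_{f_q}^\dagger$ by $c_{f_q+2}^\dagger$ (all other fermion positions unchanged) and replacing $|s_{f_q+1}\rangle,|s_{f_q+2}\rangle$ by $|s'_{f_q+1}\rangle,|s'_{f_q+2}\rangle$ (all other spins unchanged), satisfies $$\hat h_{f_q}^{(R)}|\xi\rangle + \hat h_{f_q+2}^{(L)}|\xi'\rangle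 = 0.$$
   Context: $|\Omega\rangle$ is the fermion vacuum. For the spin on site $m$, $\sigma_m^{x,y,z}$ are Pauli matrices, $\sigma_m^{\pm}=\sigma_m^x\pm i\sigma_m^y$ (so $\sigma^+$ raises and $\sigma^-$ lowers $\sigma^z$). Fermion operators act on the fermionic factor and spin operators on the spin factors of the tensor product. *)

theory Defs
  imports Complex_Main
begin

text \<open>Hilbert space of the chain: basis configurations are pairs (S, sig) where
  S is the set of occupied fermion sites and sig m is the spin on site m
  (True = spin up, i.e. sigma^z = +1; False = spin down).  The fermionic basis vector for
  S = {f_1 < ... < f_Q} is c^dag_{f_Q} ... c^dag_{f_1} |Omega>.\<close>

type_synonym config = "nat set \<times> (nat \<Rightarrow> bool)"
type_synonym state = "config \<Rightarrow> complex"

definition cdag :: "nat \<Rightarrow> state \<Rightarrow> state" where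
  "cdag j \<psi> = (\<lambda>(S, sig). if j \<in> S
      then (-1) ^ card {k \<in> S. j < k} * \<psi> (S - {j}, sig) else 0)"

definition cann :: "nat \<Rightarrow> state \<Rightarrow> state" where
  "cann j \<psi> = (\<lambda>(S, sig). if j \<notin> S
      then (-1) ^ card {k \<in> S. j < k} * \<psi> (insert j S, sig) else 0)"

text \<open>Single-site spin operator given by a 2x2 matrix A (A a b = <a|A|b>).\<close>

definition site_op :: "nat \<Rightarrow> (bool \<Rightarrow> bool \<Rightarrow> complex) \<Rightarrow> state \<Rightarrow> state" where
  "site_op m A \<psi> = (\<lambda>(S, sig). \<Sum>b\<in>UNIV. A (sig m) b * \<psi> (S, sig(m := b)))"

definition pauli_x :: "bool \<Rightarrow> bool \<Rightarrow> complex" where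
  "pauli_x a b = (if a \<noteq> b then 1 else 0)"

definition pauli_y :: "bool \<Rightarrow> bool \<Rightarrow> complex" where
  "pauli_y a b = (if a \<noteq> b then (if a then - \<i> else \<i>) else 0)"

definition pauli_z :: "bool \<Rightarrow> bool \<Rightarrow> complex" where
  "pauli_z a b = (if a = b then (if a then 1 else -1) else 0)"

definition sigma_plus :: "nat \<Rightarrow> state \<Rightarrow> state" where
  "sigma_plus m = site_op m (\<lambda>a b. pauli_x a b + \<i> * pauli_y a b)"

definition sigma_minus :: "nat \<Rightarrow> state \<Rightarrow> state" where
  "sigma_minus m = site_op m (\<lambda>a b. pauli_x a b - \<i> * pauli_y a b)"

definition hL :: "(nat \<Rightarrow> real) \<Rightarrow> (nat \<Rightarrow> real) \<Rightarrow> nat \<Rightarrow> state \<Rightarrow> state" where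
  "hL \<gamma> J m \<psi> = (if m = 1 then (\<lambda>_. 0) else
     (\<lambda>x. - complex_of_real (\<gamma> (m - 1)) * cdag (m - 1) (cann m \<psi>) x
          + complex_of_real (J (m - 1)) * cdag (m - 1) (cann m (sigma_minus m \<psi>)) x))"

definition hR :: "nat \<Rightarrow> (nat \<Rightarrow> real) \<Rightarrow> (nat \<Rightarrow> real) \<Rightarrow> nat \<Rightarrow> state \<Rightarrow> state" where
  "hR M \<gamma> J m \<psi> = (if m = M then (\<lambda>_. 0) else
     (\<lambda>x. - complex_of_real (\<gamma> m) * cdag (m + 1) (cann m \<psi>) x
          + complex_of_real (J m) * cdag (m + 1) (cann m (sigma_plus (m + 1) \<psi>)) x))"

text \<open>Fermion vacuum tensored with the spin product state
  |s_1> (x) ... (x) |s_M>; spins outside 1..M are frozen to the value False.\<close>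

definition vac_spins :: "nat \<Rightarrow> (nat \<Rightarrow> bool \<Rightarrow> complex) \<Rightarrow> state" where
  "vac_spins M s = (\<lambda>(S, sig). if S = {} \<and> (\<forall>m. m \<notin> {1..M} \<longrightarrow> \<not> sig m)
      then (\<Prod>m\<in>{1..M}. s m (sig m)) else 0)"

text \<open>The state c^dag_{f_Q} ... c^dag_{f_1} |Omega> (x) |s_1> ... |s_M>
  for fs = [f_1, ..., f_Q] (c^dag_{f_1} is applied first).\<close>

definition prod_state :: "nat \<Rightarrow> nat list \<Rightarrow> (nat \<Rightarrow> bool \<Rightarrow> complex) \<Rightarrow> state" where
  "prod_state M fs s = fold cdag fs (vac_spins M s)"

end

theory Submission
  imports Defs
begin

definition blk :: "nat set \<Rightarrow> ((nat \<Rightarrow> bool) \<Rightarrow> complex) \<Rightarrow> state" where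
  "blk F g = (\<lambda>(S, sig). if S = F then g sig else 0)"

lemma vac_blk: "vac_spins M s = blk {} (\<lambda>sig. vac_spins M s ({}, sig))"
  by (rule ext) (auto simp: blk_def vac_spins_def)

lemma cdag_blk_top:
  assumes "\<forall>y\<in>F. y < x"
  shows "cdag x (blk F g) = blk (insert x F) g"
proof (rule ext, clarify)
  fix S sig
  have xF: "x \<notin> F" using assms by blast
  show "cdag x (blk F g) (S, sig) = blk (insert x F) g (S, sig)"
  proof (cases "S = insert x F")
    case True
    then have e1: "{k \<in> S. x < k} = {}" using assms by auto
    have e2: "S - {x} = F" using True xF by auto
    have "x \<in> S" using True by simp
    then have "cdag x (blk F g) (S, sig) = (-1) ^ card {k \<in> S. x < k} * blk F g (S - {x}, sig)"
      by (simp add: cdag_def)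
    also have "\<dots> = g sig" unfolding e1 e2 by (simp add: blk_def)
    finally show ?thesis using True by (simp add: blk_def)
  next
    case False
    then have "\<not> (x \<in> S \<and> S - {x} = F)" by auto
    then show ?thesis using False by (auto simp: cdag_def blk_def)
  qed
qed

lemma prod_state_blk:
  "sorted_wrt (<) fs \<Longrightarrow> prod_state M fs s = blk (set fs) (\<lambda>sig. vac_spins M s ({}, sig))"
proof (induction fs rule: rev_induct)
  case Nil
  then show ?case by (simp add: prod_state_def vac_blk[symmetric])
next
  case (snoc x xs)
  then have "sorted_wrt (<) xs" "\<forall>y\<in>set xs. y < x" by (auto simp: sorted_wrt_append)
  then show ?case using snoc.IH
    by (simp add: prod_state_def cdag_blk_top)
qed

lemma site_op_blk:
  "site_op m A (blk F g) = blk F (\<lambda>sig. \<Sum>b\<in>UNIV. A (sig m) b * g (sig(m := b)))"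
  by (rule ext) (auto simp: site_op_def blk_def)

lemma hop_right_blk:
  assumes "a \<in> F" "a + 1 \<notin> F"
  shows "cdag (a + 1) (cann a (blk F g)) = blk (insert (a + 1) (F - {a})) g"
proof (rule ext, clarify)
  fix S sig
  show "cdag (a + 1) (cann a (blk F g)) (S, sig) = blk (insert (a + 1) (F - {a})) g (S, sig)"
  proof (cases "S = insert (a + 1) (F - {a})")
    case True
    have e1: "{k \<in> S. a + 1 < k} = {k \<in> F. a + 1 < k}" using True by auto
    have e2: "{k \<in> S - {a + 1}. a < k} = {k \<in> F. a + 1 < k}" using True assms by safe (auto intro!: Suc_lessI)
    have e3: "insert a (S - {a + 1}) = F" using True assms by auto
    have "a \<notin> S - {a+1}" using True by auto
    then show ?thesis using True e1 e2 e3
      by (simp add: cdag_def cann_def blk_def flip: power_add mult.assoc)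
  next
    case False
    have "\<not> (a + 1 \<in> S \<and> a \<notin> S - {a + 1} \<and> insert a (S - {a + 1}) = F)"
    proof
      assume h: "a + 1 \<in> S \<and> a \<notin> S - {a + 1} \<and> insert a (S - {a + 1}) = F"
      then have "S = insert (a + 1) (F - {a})" by auto
      then show False using False by simp
    qed
    then show ?thesis using False by (auto simp: cdag_def cann_def blk_def)
  qed
qed

lemma hop_left_blk:
  assumes "b \<in> F" "b - 1 \<notin> F" "1 \<le> b"
  shows "cdag (b - 1) (cann b (blk F g)) = blk (insert (b - 1) (F - {b})) g"
proof (rule ext, clarify)
  fix S sig
  show "cdag (b - 1) (cann b (blk F g)) (S, sig) = blk (insert (b - 1) (F - {b})) g (S, sig)"
  proof (cases "S = insert (b - 1) (F - {b})")
    case True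
    have e1: "{k \<in> S. b - 1 < k} = {k \<in> F. b < k}" using True assms by auto
    have e2: "{k \<in> S - {b - 1}. b < k} = {k \<in> F. b < k}" using True assms by auto
    have e3: "insert b (S - {b - 1}) = F" using True assms by auto
    have "b \<notin> S - {b - 1}" using True by auto
    then show ?thesis using True e1 e2 e3
      by (simp add: cdag_def cann_def blk_def flip: power_add mult.assoc)
  next
    case False
    have "\<not> (b - 1 \<in> S \<and> b \<notin> S - {b - 1} \<and> insert b (S - {b - 1}) = F)"
    proof
      assume h: "b - 1 \<in> S \<and> b \<notin> S - {b - 1} \<and> insert b (S - {b - 1}) = F"
      then have "S = insert (b - 1) (F - {b})" using assms by auto
      then show False using False by simp
    qed
    then show ?thesis using False by (auto simp: cdag_def cann_def blk_def)
  qed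
qed

lemma blk_add: "blk F g x + blk F h x = blk F (\<lambda>sig. g sig + h sig) x"
  by (cases x) (simp add: blk_def)

lemma blk_smult: "c * blk F g x = blk F (\<lambda>sig. c * g sig) x"
  by (cases x) (simp add: blk_def)

lemma hR_blk:
  assumes "a \<noteq> M" "a \<in> F" "a + 1 \<notin> F"
  shows "hR M \<gamma> J a (blk F g) = blk (insert (a + 1) (F - {a}))
     (\<lambda>sig. - complex_of_real (\<gamma> a) * g sig + complex_of_real (J a) *
        (\<Sum>b\<in>UNIV. (pauli_x (sig (a+1)) b + \<i> * pauli_y (sig (a+1)) b) * g (sig(a + 1 := b))))"
  unfolding hR_def sigma_plus_def site_op_blk hop_right_blk[OF assms(2,3)] using assms(1)
  by (intro ext) (simp add: blk_def split: prod.splits)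

lemma hL_blk:
  assumes "b \<noteq> 1" "b \<in> F" "b - 1 \<notin> F" "1 \<le> b"
  shows "hL \<gamma> J b (blk F g) = blk (insert (b - 1) (F - {b}))
     (\<lambda>sig. - complex_of_real (\<gamma> (b - 1)) * g sig + complex_of_real (J (b - 1)) *
        (\<Sum>c\<in>UNIV. (pauli_x (sig b) c - \<i> * pauli_y (sig b) c) * g (sig(b := c))))"
  unfolding hL_def sigma_minus_def site_op_blk hop_left_blk[OF assms(2,3,4)] using assms(1)
  by (intro ext) (simp add: blk_def split: prod.splits)


theorem lemma1:
  fixes M Q :: nat and \<gamma> J :: "nat \<Rightarrow> real" and fs :: "nat list"
    and s :: "nat \<Rightarrow> bool \<Rightarrow> complex" and q :: nat
  assumes gamma_nz: "\<forall>m. \<gamma> m \<noteq> 0"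
    and Q_bounds: "1 \<le> Q" "Q \<le> M - 2"
    and len: "length fs = Q"
    and sorted: "sorted_wrt (<) fs"
    and in_chain: "\<forall>f \<in> set fs. 1 \<le> f \<and> f \<le> M"
    and spins_nz: "\<forall>m \<in> {1..M}. s m \<noteq> (\<lambda>_. 0)"
    and q_idx: "q < Q"
    and fq_le: "fs ! q \<le> M - 2"
    and free1: "fs ! q + 1 \<notin> set fs"
    and free2: "fs ! q + 2 \<notin> set fs"
  shows "\<exists>s1 s2 :: bool \<Rightarrow> complex. s1 \<noteq> (\<lambda>_. 0) \<and> s2 \<noteq> (\<lambda>_. 0) \<and>
    (\<forall>x. hR M \<gamma> J (fs ! q) (prod_state M fs s) x
       + hL \<gamma> J (fs ! q + 2)
           (prod_state M (fs[q := fs ! q + 2]) (s(fs ! q + 1 := s1, fs ! q + 2 := s2))) x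
       = 0)"
proof -
  define f where "f = fs ! q"
  have M3: "3 \<le> M" using Q_bounds by linarith
  have fin: "f \<in> set fs" using q_idx len f_def by auto
  have f1: "1 \<le> f" "f + 2 \<le> M" using fin in_chain fq_le M3 f_def by auto
  have dist: "distinct fs" using sorted by (simp add: strict_sorted_iff)
  have set2: "set (fs[q := f + 2]) = insert (f + 2) (set fs - {f})"
    using set_update_distinct[OF dist, of q "f+2"] q_idx len f_def by simp
  have sorted2: "sorted_wrt (<) (fs[q := f + 2])"
    unfolding sorted_wrt_iff_nth_less
  proof (intro allI impI)
    fix i j assume ij: "i < j" "j < length (fs[q := f + 2])"
    have lt: "\<And>i j. i < j \<Longrightarrow> j < length fs \<Longrightarrow> fs ! i < fs ! j"
      using sorted by (simp add: sorted_wrt_iff_nth_less)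
    have ne: "\<And>k. k < length fs \<Longrightarrow> fs ! k \<noteq> f + 1 \<and> fs ! k \<noteq> f + 2"
      using free1 free2 f_def nth_mem by metis
    show "fs[q := f + 2] ! i < fs[q := f + 2] ! j"
    proof (cases "i = q")
      case True
      then have "f < fs ! j" using lt ij f_def by auto
      then show ?thesis using ne[of j] True ij by auto
    next
      case False
      show ?thesis
      proof (cases "j = q")
        case True
        then have "fs ! i < f" using lt ij f_def by auto
        then show ?thesis using True False ij by auto
      next
        case False2: False
        then show ?thesis using False lt ij by auto
      qed
    qed
  qed
  let ?V = "\<lambda>t sig. vac_spins M t ({}, sig)"
  let ?fr = "\<lambda>sig::nat\<Rightarrow>bool. \<forall>m. m \<notin> {1..M} \<longrightarrow> \<not> sig m"
  let ?P = "\<lambda>(t::nat\<Rightarrow>bool\<Rightarrow>complex) sig. \<Prod>m\<in>{1..M} - {f+1, f+2}. t m ((sig::nat\<Rightarrow>bool) m)"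
  have Vsplit: "\<And>t sig. ?V t sig = (if ?fr sig then t (f+1) (sig (f+1)) * t (f+2) (sig (f+2)) * ?P t sig else 0)"
  proof -
    fix t :: "nat \<Rightarrow> bool \<Rightarrow> complex" and sig :: "nat \<Rightarrow> bool"
    have "(\<Prod>m\<in>{1..M}. t m (sig m)) = t (f+1) (sig (f+1)) * (\<Prod>m\<in>{1..M} - {f+1}. t m (sig m))"
      using f1 by (subst prod.remove[of _ "f+1"]) auto
    also have "(\<Prod>m\<in>{1..M} - {f+1}. t m (sig m)) = t (f+2) (sig (f+2)) * ?P t sig"
      using f1 by (subst prod.remove[of _ "f+2"]) (auto simp: Diff_insert2 [symmetric] insert_commute)
    finally show "?V t sig = (if ?fr sig then t (f+1) (sig (f+1)) * t (f+2) (sig (f+2)) * ?P t sig else 0)"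
      by (auto simp: vac_spins_def mult.assoc)
  qed
  have Pupd1: "\<And>t sig b. ?P t (sig(f+1 := b)) = ?P t sig" by (rule prod.cong) auto
  have Pupd2: "\<And>t sig b. ?P t (sig(f+2 := b)) = ?P t sig" by (rule prod.cong) auto
  have frupd1: "\<And>sig b. ?fr (sig(f+1 := b)) = ?fr sig" using f1 by auto
  have frupd2: "\<And>sig b. ?fr (sig(f+2 := b)) = ?fr sig" using f1 by auto
  define t1 where "t1 = s (f+1)"
  define t2 where "t2 = s (f+2)"
  define g where "g = complex_of_real (\<gamma> f)"
  define j where "j = complex_of_real (J f)"
  define g' where "g' = complex_of_real (\<gamma> (f+1))"
  define j' where "j' = complex_of_real (J (f+1))"
  have gnz: "g \<noteq> 0" "g' \<noteq> 0" using gamma_nz g_def g'_def by auto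
  define s1 where "s1 = (\<lambda>u. (if u then - g * t1 True + j * 2 * t1 False else - g * t1 False))"
  define s2 where "s2 = (\<lambda>w. (if w then t2 True / g' else (t2 False + 2 * j' * t2 True / g') / g'))"
  have t1nz: "t1 \<noteq> (\<lambda>_. 0)" "t2 \<noteq> (\<lambda>_. 0)" using spins_nz f1 t1_def t2_def by auto
  have s1nz: "s1 \<noteq> (\<lambda>_. 0)"
  proof
    assume h: "s1 = (\<lambda>_. 0)"
    have a: "s1 False = 0" "s1 True = 0" using h by auto
    then have "t1 False = 0" using gnz by (simp add: s1_def)
    moreover then have "t1 True = 0" using a gnz by (simp add: s1_def)
    ultimately have "t1 = (\<lambda>_. 0)" by (intro ext) (metis (full_types))
    then show False using t1nz(1) by simp
  qed
  have s2nz: "s2 \<noteq> (\<lambda>_. 0)"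
  proof
    assume h: "s2 = (\<lambda>_. 0)"
    have a: "s2 False = 0" "s2 True = 0" using h by auto
    then have "t2 True = 0" using gnz by (simp add: s2_def)
    moreover then have "t2 False = 0" using a gnz by (simp add: s2_def)
    ultimately have "t2 = (\<lambda>_. 0)" by (intro ext) (metis (full_types))
    then show False using t1nz(2) by simp
  qed
  define s' where "s' = s(f + 1 := s1, f + 2 := s2)"
  have P': "\<And>sig. ?P s' sig = ?P s sig" unfolding s'_def by (rule prod.cong) auto
  have hR_eq: "hR M \<gamma> J f (prod_state M fs s) = blk (insert (f+1) (set fs - {f})) 
     (\<lambda>sig. - g * ?V s sig + j *
        (\<Sum>b\<in>UNIV. (pauli_x (sig (f+1)) b + \<i> * pauli_y (sig (f+1)) b) * ?V s (sig(f + 1 := b))))"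
    unfolding prod_state_blk[OF sorted] g_def j_def
    using f1 fin free1 f_def M3 by (intro hR_blk) auto
  have hL_eq: "hL \<gamma> J (f + 2) (prod_state M (fs[q := f + 2]) s') = blk (insert (f+1) (set fs - {f})) 
     (\<lambda>sig. - g' * ?V s' sig + j' *
        (\<Sum>c\<in>UNIV. (pauli_x (sig (f+2)) c - \<i> * pauli_y (sig (f+2)) c) * ?V s' (sig(f + 2 := c))))"
  proof -
    have "insert (f + 2 - 1) (set (fs[q := f + 2]) - {f + 2}) = insert (f+1) (set fs - {f})"
      using set2 free2 f_def by auto
    moreover have "hL \<gamma> J (f + 2) (prod_state M (fs[q := f + 2]) s') = blk (insert (f + 2 - 1) (set (fs[q := f + 2]) - {f + 2}))
     (\<lambda>sig. - complex_of_real (\<gamma> (f + 2 - 1)) * ?V s' sig + complex_of_real (J (f + 2 - 1)) *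
        (\<Sum>c\<in>UNIV. (pauli_x (sig (f+2)) c - \<i> * pauli_y (sig (f+2)) c) * ?V s' (sig(f + 2 := c))))"
      unfolding prod_state_blk[OF sorted2]
      using set2 free1 f_def by (intro hL_blk) auto
    ultimately show ?thesis by (simp add: g'_def j'_def)
  qed
  have key: "\<And>sig. (- g * ?V s sig + j *
        (\<Sum>b\<in>UNIV. (pauli_x (sig (f+1)) b + \<i> * pauli_y (sig (f+1)) b) * ?V s (sig(f + 1 := b))))
     + (- g' * ?V s' sig + j' *
        (\<Sum>c\<in>UNIV. (pauli_x (sig (f+2)) c - \<i> * pauli_y (sig (f+2)) c) * ?V s' (sig(f + 2 := c)))) = 0"
  proof -
    fix sig :: "nat \<Rightarrow> bool"
    have s'1: "s' (f+1) = s1" "s' (f+2) = s2" by (auto simp: s'_def)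
    have s1': "s (f+1) = t1" "s (f+2) = t2" by (auto simp: t1_def t2_def)
    define u where "u = sig (f+1)"
    define w where "w = sig (f+2)"
    define Pm where "Pm = ?P s sig"
    have V0: "?V s sig = (if ?fr sig then t1 u * t2 w * Pm else 0)"
      unfolding u_def w_def Pm_def t1_def t2_def by (rule Vsplit)
    have V1: "\<And>b. ?V s (sig(f+1:=b)) = (if ?fr sig then t1 b * t2 w * Pm else 0)"
    proof -
      fix b
      show "?V s (sig(f+1:=b)) = (if ?fr sig then t1 b * t2 w * Pm else 0)"
      proof -
        have e: "(sig(f+1:=b))(f+1) = b" "(sig(f+1:=b))(f+2) = sig(f+2)" by simp_all
        show ?thesis
        unfolding u_def w_def Pm_def t1_def t2_def
        by (subst Vsplit) (simp only: Pupd1 frupd1 e)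
      qed
    qed
    have V0': "?V s' sig = (if ?fr sig then s1 u * s2 w * Pm else 0)"
      unfolding u_def w_def Pm_def s'1[symmetric] P'[of sig, symmetric] by (rule Vsplit)
    have V2: "\<And>c. ?V s' (sig(f+2:=c)) = (if ?fr sig then s1 u * s2 c * Pm else 0)"
    proof -
      fix c
      show "?V s' (sig(f+2:=c)) = (if ?fr sig then s1 u * s2 c * Pm else 0)"
      proof -
        have e: "(sig(f+2:=c))(f+2) = c" "(sig(f+2:=c))(f+1) = sig(f+1)" by simp_all
        show ?thesis
        unfolding u_def w_def Pm_def s'1[symmetric] P'[of sig, symmetric]
        by (subst Vsplit) (simp only: Pupd2 frupd2 e)
      qed
    qed
    show "?thesis sig"
    proof (cases "?fr sig")
      case False
      show ?thesis
        by (simp only: V0 V1 V0' V2 if_not_P[OF False]) simp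
    next
      case True
      show ?thesis
        apply (simp only: V0 V1 V0' V2 if_P[OF True] u_def[symmetric] w_def[symmetric])
        using gnz
        by (cases u; cases w)
          (simp_all add: UNIV_bool pauli_x_def pauli_y_def s1_def s2_def field_simps)
    qed
  qed
  show ?thesis
  proof (intro exI conjI allI)
    show "s1 \<noteq> (\<lambda>_. 0)" "s2 \<noteq> (\<lambda>_. 0)" by (fact s1nz, fact s2nz)
    fix x
    show "hR M \<gamma> J (fs ! q) (prod_state M fs s) x + hL \<gamma> J (fs ! q + 2)
           (prod_state M (fs[q := fs ! q + 2]) (s(fs ! q + 1 := s1, fs ! q + 2 := s2))) x = 0"
      using hR_eq hL_eq key unfolding f_def[symmetric] s'_def[symmetric]
      by (simp add: blk_add) (simp add: blk_def split: prod.splits)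
  qed
qed

end
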